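(* Let $d,n\in\mathbb{N}$, $\mathbb{Z}_+=\{0,1,\ldots\}$, $\|x\|_\infty=\max_i|x_i|$, $x\sim y$ iff $|x-y|=1$ (Euclidean norm). Define $u_n:\mathbb{Z}_+^d\to\mathbb{R}$ by $u_n(x)=1$ if $\|x\|_\infty\le n$ and $u_n(x)=0$ otherwise. Then for $t>0$ and $0<p<\infty$, \[\sum_{j\in\mathbb{Z}_+^d\setminus\{0\}}\frac{|u_n(j)|^p}{\|j\|_\infty^t}\ge\begin{cases}\frac{d}{d-t}n^{d-t},&\text{if }d-t\ge1,\\ \frac{d}{|d-t|}\,|(n+1)^{d-t}-1|,&\text{if }d-t<1,\ d-t\ne0,\\ d\ln(n+1),&\text{if }d-t=0,\end{cases}\] and \[\sum_{x\in\mathbb{Z}_+^d}\ \sum_{\substack{y\in\mathbb{Z}_+^d\\ y\sim x}}|u_n(x)-u_n(y)|^p\le\begin{cases}2dn^{d-1}+2^{d+1}dn^{d-2},&\text{if }d\ge2,\\ 2dn^{d-1},&\text{if }d=1.\end{cases}\] *)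

theory Defs
  imports "HOL-Analysis.Analysis"
begin

text \<open>Points of Z_+^d are represented as functions nat => nat vanishing at all
coordinates i >= d (coordinates are indexed 0..d-1).\<close>

definition Zplus :: "nat \<Rightarrow> (nat \<Rightarrow> nat) set" where
  "Zplus d = {x. \<forall>i\<ge>d. x i = 0}"

definition supnorm :: "nat \<Rightarrow> (nat \<Rightarrow> nat) \<Rightarrow> real" where
  "supnorm d x = real (Max (x ` {..<d}))"

definition eucl_dist :: "nat \<Rightarrow> (nat \<Rightarrow> nat) \<Rightarrow> (nat \<Rightarrow> nat) \<Rightarrow> real" where
  "eucl_dist d x y = sqrt (\<Sum>i<d. (real (x i) - real (y i))^2)"

definition adj :: "nat \<Rightarrow> (nat \<Rightarrow> nat) \<Rightarrow> (nat \<Rightarrow> nat) \<Rightarrow> bool" where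
  "adj d x y \<longleftrightarrow> eucl_dist d x y = 1"

definition u :: "nat \<Rightarrow> nat \<Rightarrow> (nat \<Rightarrow> nat) \<Rightarrow> real" where
  "u d n x = (if supnorm d x \<le> real n then 1 else 0)"

end

theory Submission
  imports Defs "HOL-Analysis.Harmonic_Numbers"
begin


definition E :: "nat \<Rightarrow> (nat \<Rightarrow> nat) \<Rightarrow> (nat \<Rightarrow> nat)" where
  "E d f = (\<lambda>l. if l < d then f l else 0)"

definition zbox :: "nat \<Rightarrow> nat \<Rightarrow> (nat \<Rightarrow> nat) set" where
  "zbox d m = {x \<in> Zplus d. \<forall>i<d. x i \<le> m}"

lemma E_restrict: "x \<in> Zplus d \<Longrightarrow> E d (restrict x {..<d}) = x"
  by (auto simp: E_def Zplus_def fun_eq_iff)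

lemma finite_zbox: "finite (zbox d m)"
proof -
  have "zbox d m \<subseteq> E d ` PiE {..<d} (\<lambda>_. {..m})"
  proof
    fix x assume x: "x \<in> zbox d m"
    hence "x = E d (restrict x {..<d})" using E_restrict by (auto simp: zbox_def)
    moreover have "restrict x {..<d} \<in> PiE {..<d} (\<lambda>_. {..m})" using x by (auto simp: zbox_def)
    ultimately show "x \<in> E d ` PiE {..<d} (\<lambda>_. {..m})" by blast
  qed
  moreover have "finite (PiE {..<d} (\<lambda>_. {..m::nat}))" by (intro finite_PiE) auto
  ultimately show ?thesis by (meson finite_imageI finite_subset)
qed

lemma prod_if_eq:
  assumes "i < d"
  shows "(\<Prod>l<d. (if l = i then 1 else c)) = (c::nat) ^ (d - 1)"
proof -
  have "(\<Prod>l<d. (if l = i then 1 else c)) = (\<Prod>l\<in>{..<d} - {i}. (if l = i then 1 else c))"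
    using assms by (subst prod.remove[of _ i]) auto
  also have "\<dots> = (\<Prod>l\<in>{..<d} - {i}. c)" by (rule prod.cong) auto
  also have "\<dots> = c ^ (d - 1)" using assms by simp
  finally show ?thesis .
qed

lemma card_face_le:
  assumes "i < d"
  shows "card {x \<in> zbox d n. x i = n} \<le> (n+1) ^ (d - 1)"
proof -
  let ?P = "PiE {..<d} (\<lambda>l. if l = i then {n} else {..n})"
  have inj: "inj_on (\<lambda>x. restrict x {..<d}) {x \<in> zbox d n. x i = n}"
    by (rule inj_onI) (metis (no_types, lifting) E_restrict zbox_def mem_Collect_eq)
  have sub: "(\<lambda>x. restrict x {..<d}) ` {x \<in> zbox d n. x i = n} \<subseteq> ?P"
    by (intro image_subsetI PiE_I) (auto simp: zbox_def)
  have "card {x \<in> zbox d n. x i = n} = card ((\<lambda>x. restrict x {..<d}) ` {x \<in> zbox d n. x i = n})"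
    using inj by (simp add: card_image)
  also have "\<dots> \<le> card ?P" by (rule card_mono[OF _ sub]) (auto intro: finite_PiE)
  also have "card ?P = (\<Prod>l<d. card (if l = i then {n} else {..n}))" by (simp add: card_PiE)
  also have "\<dots> = (\<Prod>l<d. (if l = i then 1 else n+1))" by (rule prod.cong) auto
  also have "\<dots> = (n+1)^(d-1)" using prod_if_eq[OF assms] .
  finally show ?thesis .
qed

definition A :: "nat \<Rightarrow> nat \<Rightarrow> nat \<Rightarrow> (nat \<Rightarrow> nat) set" where
  "A d k i = {j \<in> Zplus d. j i = k \<and> (\<forall>l<d. l \<noteq> i \<longrightarrow> j l < k)}"

lemma A_sub_zbox: "i < d \<Longrightarrow> A d k i \<subseteq> zbox d k"
  by (auto simp: A_def zbox_def less_imp_le_nat)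

lemma card_A_ge:
  assumes "i < d"
  shows "card (A d k i) \<ge> k ^ (d - 1)"
proof -
  let ?P = "PiE {..<d} (\<lambda>l. if l = i then {k} else {..<k})"
  have inj: "inj_on (E d) ?P"
  proof (rule inj_onI)
    fix f g assume f: "f \<in> ?P" and g: "g \<in> ?P" and eq: "E d f = E d g"
    show "f = g"
    proof
      fix l show "f l = g l"
      proof (cases "l < d")
        case True then show ?thesis using fun_cong[OF eq, of l] by (simp add: E_def)
      next
        case False then show ?thesis using f g by (auto simp: PiE_def extensional_def)
      qed
    qed
  qed
  have sub: "E d ` ?P \<subseteq> A d k i"
  proof
    fix y assume "y \<in> E d ` ?P"
    then obtain f where f: "f \<in> ?P" and y: "y = E d f" by blast
    have fl: "\<And>l. l < d \<Longrightarrow> f l \<in> (if l = i then {k} else {..<k})" using f by blast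
    have h1: "f i = k" using fl[of i] assms by simp
    have h2: "\<And>l. l < d \<Longrightarrow> l \<noteq> i \<Longrightarrow> f l < k" using fl by force
    show "y \<in> A d k i" using assms h1 h2 unfolding y A_def E_def Zplus_def
      by auto
  qed
  have "k ^ (d - 1) = (\<Prod>l<d. (if l = i then 1 else k))" using prod_if_eq[OF assms] by simp
  also have "\<dots> = (\<Prod>l<d. card (if l = i then {k} else {..<k}))" by (rule prod.cong) auto
  also have "\<dots> = card ?P" by (simp add: card_PiE)
  also have "\<dots> = card (E d ` ?P)" using inj by (simp add: card_image)
  also have "\<dots> \<le> card (A d k i)"
    by (rule card_mono[OF finite_subset[OF A_sub_zbox[OF assms] finite_zbox] sub])
  finally show ?thesis .
qed

lemma supnorm_le_iff:
  assumes "d \<ge> 1"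
  shows "supnorm d x \<le> real m \<longleftrightarrow> (\<forall>i<d. x i \<le> m)"
proof -
  have "0 \<in> {..<d}" using assms by simp
  hence "{..<d} \<noteq> {}" by blast
  then show ?thesis by (auto simp: supnorm_def)
qed

lemma supnorm_A:
  assumes "i < d" "j \<in> A d k i"
  shows "supnorm d j = real k"
proof -
  have "Max (j ` {..<d}) = k"
  proof (rule Max_eqI)
    show "finite (j ` {..<d})" by simp
    show "k \<in> j ` {..<d}" using assms by (auto simp: A_def)
    fix y assume "y \<in> j ` {..<d}"
    then obtain l where "l < d" "y = j l" by auto
    then show "y \<le> k" using assms by (cases "l = i") (auto simp: A_def less_imp_le_nat)
  qed
  thus ?thesis by (simp add: supnorm_def)
qed



lemma adj_sym: "adj d x y = adj d y x"
  unfolding adj_def eucl_dist_def by (simp add: power2_commute)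

lemma adj_step:
  assumes x: "x \<in> zbox d n" and y: "y \<in> Zplus d" and a: "adj d x y" and ny: "y \<notin> zbox d n"
  shows "\<exists>i<d. x i = n \<and> y = x(i := n+1)"
proof -
  let ?T = "\<lambda>l. (real (x l) - real (y l))^2"
  have S: "(\<Sum>l<d. ?T l) = 1"
    using a unfolding adj_def eucl_dist_def by (metis real_sqrt_eq_1_iff)
  obtain i where i: "i < d" "y i > n" using y ny by (auto simp: zbox_def)
  have xi: "x i \<le> n" using x i by (auto simp: zbox_def)
  have diff: "real (y i) - real (x i) \<ge> 1" using i xi by linarith
  have Ti: "?T i \<ge> 1"
  proof -
    have "?T i = (real (y i) - real (x i))^2" by (simp add: power2_commute)
    also have "\<dots> \<ge> 1" using diff by (simp add: one_le_power)
    finally show ?thesis by simp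
  qed
  have split: "(\<Sum>l<d. ?T l) = ?T i + (\<Sum>l\<in>{..<d} - {i}. ?T l)"
    using i by (subst sum.remove[of _ i]) auto
  have rest_nn: "(\<Sum>l\<in>{..<d} - {i}. ?T l) \<ge> 0" by (intro sum_nonneg) auto
  have Ti1: "?T i = 1" using S split rest_nn Ti by linarith
  have rest0: "(\<Sum>l\<in>{..<d} - {i}. ?T l) = 0" using S split Ti1 by linarith
  have eqs: "\<And>l. l \<in> {..<d} - {i} \<Longrightarrow> ?T l = 0"
    using rest0 by (subst (asm) sum_nonneg_eq_0_iff) auto
  have "(real (y i) - real (x i))^2 = 1" using Ti1 by (simp add: power2_commute)
  hence "real (y i) - real (x i) = 1 \<or> real (y i) - real (x i) = -1"
    by (simp only: power2_eq_1_iff)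
  hence "real (y i) - real (x i) = 1" using diff by linarith
  hence yi: "y i = x i + 1" by linarith
  hence xin: "x i = n" using i xi by linarith
  have "y = x(i := n+1)"
  proof
    fix l show "y l = (x(i := n+1)) l"
    proof (cases "l = i")
      case True thus ?thesis using yi xin by simp
    next
      case False
      show ?thesis
      proof (cases "l < d")
        case True thus ?thesis using eqs[of l] False by simp
      next
        case nl: False
        thus ?thesis using x y False by (auto simp: zbox_def Zplus_def)
      qed
    qed
  qed
  thus ?thesis using i xin by blast
qed



lemma zbox_mono: "m \<le> m' \<Longrightarrow> zbox d m \<subseteq> zbox d m'"
  by (auto simp: zbox_def)

definition P1 :: "nat \<Rightarrow> nat \<Rightarrow> ((nat \<Rightarrow> nat) \<times> (nat \<Rightarrow> nat)) set" where
  "P1 d n = (\<Union>i<d. (\<lambda>x. (x, x(i := n+1))) ` {x \<in> zbox d n. x i = n})"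

lemma finite_P1: "finite (P1 d n)"
  unfolding P1_def by (intro finite_UN_I) (auto intro: finite_subset[OF _ finite_zbox])

lemma card_P1: "card (P1 d n) \<le> d * (n+1)^(d-1)"
proof -
  have "card (P1 d n) \<le> (\<Sum>i<d. card ((\<lambda>x. (x, x(i := n+1))) ` {x \<in> zbox d n. x i = n}))"
    unfolding P1_def by (rule card_UN_le) simp
  also have "\<dots> \<le> (\<Sum>i<d. (n+1)^(d-1))"
    by (intro sum_mono order.trans[OF card_image_le card_face_le])
       (auto intro: finite_subset[OF _ finite_zbox])
  also have "\<dots> = d * (n+1)^(d-1)" by simp
  finally show ?thesis .
qed

definition PP :: "nat \<Rightarrow> nat \<Rightarrow> ((nat \<Rightarrow> nat) \<times> (nat \<Rightarrow> nat)) set" where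
  "PP d n = {(x,y). x \<in> Zplus d \<and> y \<in> Zplus d \<and> adj d x y \<and> (x \<in> zbox d n) \<noteq> (y \<in> zbox d n)}"

lemma PP_sub: "PP d n \<subseteq> P1 d n \<union> prod.swap ` P1 d n"
proof
  fix z assume z: "z \<in> PP d n"
  obtain x y where xy: "z = (x,y)" by force
  show "z \<in> P1 d n \<union> prod.swap ` P1 d n"
  proof (cases "x \<in> zbox d n")
    case True
    hence "y \<notin> zbox d n" "y \<in> Zplus d" "adj d x y" using z xy by (auto simp: PP_def)
    then obtain i where "i<d" "x i = n" "y = x(i := n+1)" using adj_step True by blast
    hence "z \<in> P1 d n" using xy True unfolding P1_def by blast
    thus ?thesis by blast
  next
    case False
    hence "y \<in> zbox d n" "x \<in> Zplus d" "adj d y x" using z xy adj_sym by (auto simp: PP_def)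
    then obtain i where "i<d" "y i = n" "x = y(i := n+1)" using adj_step False by blast
    hence "(y,x) \<in> P1 d n" using \<open>y \<in> zbox d n\<close> unfolding P1_def by blast
    hence "prod.swap (y,x) \<in> prod.swap ` P1 d n" by blast
    thus ?thesis using xy by simp
  qed
qed

lemma finite_PP: "finite (PP d n)"
  by (rule finite_subset[OF PP_sub]) (simp add: finite_P1)

lemma card_PP: "card (PP d n) \<le> 2 * d * (n+1)^(d-1)"
proof -
  have "card (PP d n) \<le> card (P1 d n \<union> prod.swap ` P1 d n)"
    by (rule card_mono[OF _ PP_sub]) (simp add: finite_P1)
  also have "\<dots> \<le> card (P1 d n) + card (prod.swap ` P1 d n)" by (rule card_Un_le)
  also have "\<dots> \<le> card (P1 d n) + card (P1 d n)" by (simp add: card_image_le finite_P1)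
  also have "\<dots> \<le> 2 * d * (n+1)^(d-1)" using card_P1[of d n] by simp
  finally show ?thesis .
qed



lemma mvt_powr:
  fixes a b s :: real
  assumes "0 < a" "a < b"
  shows "\<exists>z. a < z \<and> z < b \<and> b powr s - a powr s = (b - a) * (s * z powr (s - 1))"
  using assms by (intro MVT2) (auto intro!: has_real_derivative_powr)

lemma step_ge1:
  fixes s :: real
  assumes "s \<ge> 1" "k \<ge> 1"
  shows "real k powr s - real (k - 1) powr s \<le> s * real k powr (s - 1)"
proof (cases "k = 1")
  case True thus ?thesis using assms by simp
next
  case False
  hence k2: "real k - 1 > 0" using assms by simp
  have rk: "real (k - 1) = real k - 1" using assms by simp
  obtain z where z: "real k - 1 < z" "z < real k"
    "real k powr s - (real k - 1) powr s = (real k - (real k - 1)) * (s * z powr (s - 1))"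
    using mvt_powr[OF k2, of "real k" s] by auto
  have "z powr (s - 1) \<le> real k powr (s - 1)"
    using z k2 assms by (intro powr_mono2) auto
  hence "s * z powr (s - 1) \<le> s * real k powr (s - 1)" using assms by (intro mult_left_mono) auto
  thus ?thesis using z rk by simp
qed

lemma step_lt1:
  fixes s :: real
  assumes "s < 1" "s \<noteq> 0" "k \<ge> 1"
  shows "(real (k+1) powr s - real k powr s) / s \<le> real k powr (s - 1)"
proof -
  have k0: "real k > 0" using assms by simp
  obtain z where z: "real k < z" "z < real k + 1"
    "(real k + 1) powr s - real k powr s = (real k + 1 - real k) * (s * z powr (s - 1))"
    using mvt_powr[OF k0, of "real k + 1" s] by auto
  have "z powr (s - 1) \<le> real k powr (s - 1)"
    using z k0 assms by (intro powr_mono2') auto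
  moreover have "(real (k+1) powr s - real k powr s) / s = z powr (s - 1)"
    using z assms by (simp add: add.commute)
  ultimately show ?thesis by simp
qed

lemma sum_ge1:
  fixes s :: real
  assumes "s \<ge> 1"
  shows "real n powr s / s \<le> (\<Sum>i<n. real (Suc i) powr (s - 1))"
proof -
  have "real n powr s = (\<Sum>i<n. real (Suc i) powr s - real i powr s)"
    using sum_lessThan_telescope[of "\<lambda>i. real i powr s" n] assms by simp
  also have "\<dots> \<le> (\<Sum>i<n. s * real (Suc i) powr (s - 1))"
    using step_ge1[OF assms] by (intro sum_mono) (metis diff_Suc_1 le_add1 plus_1_eq_Suc)
  also have "\<dots> = s * (\<Sum>i<n. real (Suc i) powr (s - 1))" by (simp add: sum_distrib_left)
  finally show ?thesis using assms by (simp add: divide_le_eq mult.commute)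
qed

lemma sum_lt1:
  fixes s :: real
  assumes "s < 1" "s \<noteq> 0"
  shows "((real n + 1) powr s - 1) / s \<le> (\<Sum>i<n. real (Suc i) powr (s - 1))"
proof -
  have "((real n + 1) powr s - 1) / s = (\<Sum>i<n. (real (Suc (Suc i)) powr s - real (Suc i) powr s) / s)"
    using sum_lessThan_telescope[of "\<lambda>i. real (Suc i) powr s" n]
    by (simp add: sum_divide_distrib[symmetric] add.commute)
  also have "\<dots> \<le> (\<Sum>i<n. real (Suc i) powr (s - 1))"
    using step_lt1[OF assms] by (intro sum_mono) (metis Suc_eq_plus1 le_add2)
  finally show ?thesis .
qed

lemma sum_eq0:
  "ln (real n + 1) \<le> (\<Sum>i<n. real (Suc i) powr (-1))"
proof -
  have "ln (real n + 1) \<le> (harm n :: real)" by (rule ln_le_harm)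
  also have "\<dots> = (\<Sum>i<n. real (Suc i) powr (-1))"
    unfolding harm_altdef by (intro sum.cong) (auto simp: powr_minus)
  finally show ?thesis .
qed

lemma binom_bound_real:
  fixes n :: real
  assumes "n \<ge> 1"
  shows "(n+1)^(Suc m) \<le> n^(Suc m) + (2^(Suc m) - 1) * n^m"
proof (induction m)
  case 0 thus ?case by simp
next
  case (Suc m)
  have c: "(2::real)^(Suc m) - 1 \<ge> 0" using one_le_power[of "2::real" "Suc m"] by linarith
  have nm: "n^m \<le> n^(Suc m)" using assms by (simp add: power_increasing)
  have "(n+1)^(Suc (Suc m)) = (n+1) * (n+1)^(Suc m)" by simp
  also have "\<dots> \<le> (n+1) * (n^(Suc m) + (2^(Suc m) - 1) * n^m)"
    using Suc assms by (intro mult_left_mono) auto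
  also have "\<dots> = n^(Suc (Suc m)) + n^(Suc m) + (2^(Suc m) - 1) * n^(Suc m) + (2^(Suc m) - 1) * n^m"
    by (simp add: algebra_simps)
  also have "\<dots> \<le> n^(Suc (Suc m)) + n^(Suc m) + (2^(Suc m) - 1) * n^(Suc m) + (2^(Suc m) - 1) * n^(Suc m)"
    using mult_left_mono[OF nm c] by (simp only: add_le_cancel_left)
  also have "\<dots> = n^(Suc (Suc m)) + (2^(Suc (Suc m)) - 1) * n^(Suc m)"
    by (simp add: algebra_simps)
  finally show ?case .
qed

lemma u_eq: "d \<ge> 1 \<Longrightarrow> x \<in> Zplus d \<Longrightarrow> u d n x = (if x \<in> zbox d n then 1 else 0)"
  by (simp add: u_def supnorm_le_iff zbox_def)

lemma part1:
  fixes d n :: nat and t p :: real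
  assumes d: "d \<ge> 1" and n: "n \<ge> 1" and t: "t > 0" and p: "p > 0"
  shows "real d * (\<Sum>i<n. real (Suc i) powr (real d - t - 1))
     \<le> (\<Sum>\<^sub>\<infinity>j\<in>Zplus d - {(\<lambda>_. 0)}. \<bar>u d n j\<bar> powr p / supnorm d j powr t)"
proof -
  define F where "F j = \<bar>u d n j\<bar> powr p / supnorm d j powr t" for j
  define J where "J = zbox d n - {(\<lambda>_. 0)}"
  define I where "I = {1..n} \<times> {..<d}"
  define AA where "AA = (\<lambda>(k,i). A d k i)"
  have finJ: "finite J" unfolding J_def using finite_zbox by auto
  have Fnn: "F j \<ge> 0" for j unfolding F_def by simp
  have "(\<Sum>\<^sub>\<infinity>j\<in>Zplus d - {(\<lambda>_. 0)}. F j) = (\<Sum>\<^sub>\<infinity>j\<in>J. F j)"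
  proof (rule infsum_cong_neutral)
    fix x assume "x \<in> Zplus d - {(\<lambda>_. 0)} - J"
    hence "x \<in> Zplus d" "x \<notin> zbox d n" unfolding J_def by auto
    hence "u d n x = 0" using u_eq[OF d] by simp
    thus "F x = 0" unfolding F_def by simp
  qed (auto simp: J_def zbox_def)
  also have "\<dots> = sum F J" using finJ by simp
  finally have eq1: "(\<Sum>\<^sub>\<infinity>j\<in>Zplus d - {(\<lambda>_. 0)}. F j) = sum F J" .
  have finA: "\<forall>x\<in>I. finite (AA x)"
    unfolding I_def AA_def using finite_subset[OF A_sub_zbox finite_zbox] by auto
  have disj: "\<forall>x\<in>I. \<forall>y\<in>I. x \<noteq> y \<longrightarrow> AA x \<inter> AA y = {}"
  proof (intro ballI impI)
    fix x y assume x: "x \<in> I" and y: "y \<in> I" and ne: "x \<noteq> y"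
    obtain k i where ki: "x = (k,i)" by force
    obtain k' i' where ki': "y = (k',i')" by force
    show "AA x \<inter> AA y = {}"
    proof (rule ccontr)
      assume "AA x \<inter> AA y \<noteq> {}"
      then obtain j where j: "j \<in> A d k i" "j \<in> A d k' i'" unfolding AA_def ki ki' by auto
      have id: "i < d" "i' < d" using x y ki ki' I_def by auto
      have "supnorm d j = real k" using supnorm_A[OF id(1) j(1)] .
      moreover have "supnorm d j = real k'" using supnorm_A[OF id(2) j(2)] .
      ultimately have kk: "k = k'" by simp
      have "i = i'"
      proof (rule ccontr)
        assume ne': "i \<noteq> i'"
        have "j i = k" using j(1) unfolding A_def by simp
        moreover have "j i < k'" using j(2) id(1) ne' unfolding A_def by simp
        ultimately show False using kk by simp
      qed
      thus False using kk ne ki ki' by simp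
    qed
  qed
  have sub: "(\<Union>(AA ` I)) \<subseteq> J"
  proof
    fix j assume "j \<in> \<Union>(AA ` I)"
    then obtain k i where ki: "k \<in> {1..n}" "i < d" "j \<in> A d k i" unfolding AA_def I_def by auto
    have kn: "k \<le> n" "k \<ge> 1" using ki(1) by auto
    have "j \<in> zbox d k" using A_sub_zbox[OF ki(2)] ki(3) by blast
    hence "j \<in> zbox d n" using zbox_mono[OF kn(1)] by blast
    moreover have "j i = k" using ki(3) unfolding A_def by simp
    hence "j \<noteq> (\<lambda>_. 0)" using kn(2) by auto
    ultimately show "j \<in> J" unfolding J_def by simp
  qed
  have finI: "finite I" unfolding I_def by simp
  have "(\<Sum>x\<in>I. sum F (AA x)) = sum F (\<Union>(AA ` I))"
    by (rule sum.UNION_disjoint[OF finI finA disj, symmetric])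
  also have "\<dots> \<le> sum F J" by (rule sum_mono2[OF finJ sub]) (simp add: Fnn)
  finally have le1: "(\<Sum>x\<in>I. sum F (AA x)) \<le> sum F J" .
  have le2: "real k powr (real d - t - 1) \<le> sum F (AA (k,i))" if "(k,i) \<in> I" for k i
  proof -
    have k: "k \<ge> 1" "k \<le> n" "i < d" using that I_def by auto
    have Fj: "\<And>j. j \<in> A d k i \<Longrightarrow> F j = 1 / real k powr t"
    proof -
      fix j assume j: "j \<in> A d k i"
      have "supnorm d j = real k" using supnorm_A[OF k(3) j] .
      moreover hence "u d n j = 1" using k unfolding u_def by simp
      ultimately show "F j = 1 / real k powr t" unfolding F_def by simp
    qed
    have "sum F (AA (k,i)) = (\<Sum>j\<in>A d k i. 1 / real k powr t)"
      unfolding AA_def using Fj by (simp only: prod.case) (rule sum.cong, auto)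
    also have "\<dots> = real (card (A d k i)) * (1 / real k powr t)" by simp
    finally have e1: "sum F (AA (k,i)) = real (card (A d k i)) * (1 / real k powr t)" .
    have "k ^ (d - 1) \<le> card (A d k i)" using card_A_ge[OF k(3), of k] .
    hence "real (k ^ (d - 1)) \<le> real (card (A d k i))" by (simp only: of_nat_le_iff)
    hence e2: "real k ^ (d - 1) \<le> real (card (A d k i))" by simp
    have kp: "real k > 0" using k by simp
    have e3: "real k ^ (d - 1) = real k powr (real d - 1)"
      using k d kp by (simp add: powr_realpow[symmetric] of_nat_diff)
    have "real k powr (real d - t - 1) = real k powr ((real d - 1) - t)" by (simp add: algebra_simps)
    also have "\<dots> = real k powr (real d - 1) / real k powr t" by (rule powr_diff)
    finally have e4: "real k powr (real d - 1) * (1 / real k powr t) = real k powr (real d - t - 1)"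
      by simp
    have c0: "1 / real k powr t \<ge> 0" by simp
    have "real k ^ (d - 1) * (1 / real k powr t) \<le> real (card (A d k i)) * (1 / real k powr t)"
      by (rule mult_right_mono[OF e2 c0])
    thus ?thesis using e1 e3 e4 by simp
  qed
  have "(\<Sum>x\<in>I. real (fst x) powr (real d - t - 1)) \<le> (\<Sum>x\<in>I. sum F (AA x))"
    using le2 by (intro sum_mono) auto
  moreover have "(\<Sum>x\<in>I. real (fst x) powr (real d - t - 1))
     = real d * (\<Sum>i<n. real (Suc i) powr (real d - t - 1))"
  proof -
    have "(\<Sum>x\<in>I. real (fst x) powr (real d - t - 1))
        = (\<Sum>(k,i)\<in>{1..n}\<times>{..<d}. real k powr (real d - t - 1))"
      unfolding I_def by (rule sum.cong) auto
    also have "\<dots> = (\<Sum>k\<in>{1..n}. \<Sum>i<d. real k powr (real d - t - 1))"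
      by (rule sum.cartesian_product[symmetric])
    also have "\<dots> = (\<Sum>k\<in>{1..n}. real d * real k powr (real d - t - 1))"
      by simp
    also have "\<dots> = real d * (\<Sum>k\<in>{1..n}. real k powr (real d - t - 1))"
      by (simp add: sum_distrib_left)
    also have "(\<Sum>k\<in>{1..n}. real k powr (real d - t - 1)) = (\<Sum>i<n. real (Suc i) powr (real d - t - 1))"
      by (rule sum_bounds_lt_plus1[symmetric])
    finally show ?thesis .
  qed
  ultimately show ?thesis using le1 eq1 unfolding F_def by simp
qed

lemma part2:
  fixes d n :: nat and p :: real
  assumes d: "d \<ge> 1" and p: "p > 0"
  shows "(\<Sum>\<^sub>\<infinity>x\<in>Zplus d. \<Sum>\<^sub>\<infinity>y\<in>{y\<in>Zplus d. adj d x y}. \<bar>u d n x - u d n y\<bar> powr p)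
     \<le> real (card (PP d n))"
proof -
  define Q where "Q x = {y. (x,y) \<in> PP d n}" for x
  have finQ: "finite (Q x)" for x
    using finite_subset[of "Q x" "snd ` PP d n"] finite_PP unfolding Q_def by force
  have inner: "(\<Sum>\<^sub>\<infinity>y\<in>{y\<in>Zplus d. adj d x y}. \<bar>u d n x - u d n y\<bar> powr p) = real (card (Q x))"
    if x: "x \<in> Zplus d" for x
  proof -
    have "(\<Sum>\<^sub>\<infinity>y\<in>{y\<in>Zplus d. adj d x y}. \<bar>u d n x - u d n y\<bar> powr p) = (\<Sum>\<^sub>\<infinity>y\<in>Q x. (1::real))"
    proof (rule infsum_cong_neutral)
      fix y assume "y \<in> {y\<in>Zplus d. adj d x y} - Q x"
      hence "y \<in> Zplus d" "(x \<in> zbox d n) = (y \<in> zbox d n)" using x unfolding Q_def PP_def by auto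
      hence "u d n x = u d n y" using u_eq[OF d] x by simp
      thus "\<bar>u d n x - u d n y\<bar> powr p = 0" by simp
    next
      fix y assume "y \<in> Q x - {y\<in>Zplus d. adj d x y}"
      thus "(1::real) = 0" unfolding Q_def PP_def by auto
    next
      fix y assume "y \<in> {y\<in>Zplus d. adj d x y} \<inter> Q x"
      hence "y \<in> Zplus d" "(x \<in> zbox d n) \<noteq> (y \<in> zbox d n)" using x unfolding Q_def PP_def by auto
      hence "\<bar>u d n x - u d n y\<bar> = 1" using u_eq[OF d] x by auto
      thus "\<bar>u d n x - u d n y\<bar> powr p = 1" by simp
    qed
    also have "\<dots> = real (card (Q x))" using finQ by simp
    finally show ?thesis .
  qed
  have "(\<Sum>\<^sub>\<infinity>x\<in>Zplus d. \<Sum>\<^sub>\<infinity>y\<in>{y\<in>Zplus d. adj d x y}. \<bar>u d n x - u d n y\<bar> powr p)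
      = (\<Sum>\<^sub>\<infinity>x\<in>fst ` PP d n. real (card (Q x)))"
  proof (rule infsum_cong_neutral)
    fix x assume "x \<in> Zplus d - fst ` PP d n"
    moreover hence "Q x = {}" unfolding Q_def by force
    ultimately show "(\<Sum>\<^sub>\<infinity>y\<in>{y\<in>Zplus d. adj d x y}. \<bar>u d n x - u d n y\<bar> powr p) = 0"
      using inner by simp
  next
    fix x assume "x \<in> fst ` PP d n - Zplus d"
    thus "real (card (Q x)) = 0" unfolding PP_def by auto
  next
    fix x assume "x \<in> Zplus d \<inter> fst ` PP d n"
    thus "(\<Sum>\<^sub>\<infinity>y\<in>{y\<in>Zplus d. adj d x y}. \<bar>u d n x - u d n y\<bar> powr p) = real (card (Q x))"
      using inner by simp
  qed
  also have "\<dots> = real (\<Sum>x\<in>fst ` PP d n. card (Q x))" using finite_PP by simp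
  also have "(\<Sum>x\<in>fst ` PP d n. card (Q x)) = card (Sigma (fst ` PP d n) Q)"
    using finite_PP finQ by (simp add: card_SigmaI)
  also have "Sigma (fst ` PP d n) Q = PP d n" unfolding Q_def by force
  finally show ?thesis by simp
qed

theorem proposition3p1:
  fixes d n :: nat and t p :: real
  assumes "d \<ge> 1" and "n \<ge> 1" and "t > 0" and "p > 0"
  shows "((\<Sum>\<^sub>\<infinity>j\<in>Zplus d - {(\<lambda>_. 0)}. \<bar>u d n j\<bar> powr p / supnorm d j powr t)
           \<ge> (if real d - t \<ge> 1 then real d / (real d - t) * real n powr (real d - t)
              else if real d - t \<noteq> 0
                then real d / \<bar>real d - t\<bar> * \<bar>(real n + 1) powr (real d - t) - 1\<bar>
              else real d * ln (real n + 1))) \<and>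
         ((\<Sum>\<^sub>\<infinity>x\<in>Zplus d. \<Sum>\<^sub>\<infinity>y\<in>{y\<in>Zplus d. adj d x y}. \<bar>u d n x - u d n y\<bar> powr p)
           \<le> (if d \<ge> 2 then 2 * real d * real n ^ (d - 1) + 2 ^ (d + 1) * real d * real n ^ (d - 2)
              else 2 * real d * real n ^ (d - 1)))"
proof
  define s where "s = real d - t"
  define S where "S = (\<Sum>i<n. real (Suc i) powr (s - 1))"
  have P1: "real d * S \<le> (\<Sum>\<^sub>\<infinity>j\<in>Zplus d - {(\<lambda>_. 0)}. \<bar>u d n j\<bar> powr p / supnorm d j powr t)"
    using part1[OF assms] unfolding S_def s_def .
  have dpos: "real d \<ge> 0" by simp
  have "(if s \<ge> 1 then real d / s * real n powr s
              else if s \<noteq> 0 then real d / \<bar>s\<bar> * \<bar>(real n + 1) powr s - 1\<bar>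
              else real d * ln (real n + 1)) \<le> real d * S"
  proof (cases "s \<ge> 1")
    case True
    have "real d / s * real n powr s = real d * (real n powr s / s)" by simp
    also have "\<dots> \<le> real d * S" using sum_ge1[OF True, of n] dpos unfolding S_def
      by (intro mult_left_mono) auto
    finally show ?thesis using True by simp
  next
    case False
    show ?thesis
    proof (cases "s = 0")
      case True
      have "real d * ln (real n + 1) \<le> real d * S"
        using sum_eq0[of n] dpos True unfolding S_def by (intro mult_left_mono) auto
      thus ?thesis using True False by simp
    next
      case s0: False
      have nn: "((real n + 1) powr s - 1) / s \<ge> 0"
      proof (cases "s > 0")
        case True
        have "1 \<le> (real n + 1) powr s" using True by (simp add: ge_one_powr_ge_zero)
        thus ?thesis using True by simp
      next
        case False
        hence sn: "s < 0" using s0 by simp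
        have "(real n + 1) powr s \<le> (real n + 1) powr 0" using sn by (intro powr_mono) auto
        hence "(real n + 1) powr s \<le> 1" by simp
        thus ?thesis using sn by (simp add: divide_nonpos_neg)
      qed
      have ab: "\<bar>(real n + 1) powr s - 1\<bar> / \<bar>s\<bar> = ((real n + 1) powr s - 1) / s"
        using nn by (metis abs_divide abs_of_nonneg)
      have "real d / \<bar>s\<bar> * \<bar>(real n + 1) powr s - 1\<bar> = real d * (\<bar>(real n + 1) powr s - 1\<bar> / \<bar>s\<bar>)"
        by simp
      also have "\<dots> = real d * (((real n + 1) powr s - 1) / s)" using ab by simp
      also have "\<dots> \<le> real d * S" using sum_lt1[of s n] False s0 dpos unfolding S_def
        by (intro mult_left_mono) auto
      finally show ?thesis using False s0 by simp
    qed
  qed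
  thus "(if real d - t \<ge> 1 then real d / (real d - t) * real n powr (real d - t)
              else if real d - t \<noteq> 0
                then real d / \<bar>real d - t\<bar> * \<bar>(real n + 1) powr (real d - t) - 1\<bar>
              else real d * ln (real n + 1))
        \<le> (\<Sum>\<^sub>\<infinity>j\<in>Zplus d - {(\<lambda>_. 0)}. \<bar>u d n j\<bar> powr p / supnorm d j powr t)"
    using P1 unfolding s_def by linarith
next
  have P2: "(\<Sum>\<^sub>\<infinity>x\<in>Zplus d. \<Sum>\<^sub>\<infinity>y\<in>{y\<in>Zplus d. adj d x y}. \<bar>u d n x - u d n y\<bar> powr p)
     \<le> 2 * real d * (real n + 1)^(d-1)"
  proof -
    have "real (card (PP d n)) \<le> real (2 * d * (n+1)^(d-1))" using card_PP[of d n] by linarith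
    also have "real (2 * d * (n+1)^(d-1)) = 2 * real d * (real n + 1)^(d-1)" by (simp add: add.commute)
    finally show ?thesis using part2[OF assms(1) assms(4), of n] by linarith
  qed
  have nr: "real n \<ge> 1" using assms by simp
  show "(\<Sum>\<^sub>\<infinity>x\<in>Zplus d. \<Sum>\<^sub>\<infinity>y\<in>{y\<in>Zplus d. adj d x y}. \<bar>u d n x - u d n y\<bar> powr p)
           \<le> (if d \<ge> 2 then 2 * real d * real n ^ (d - 1) + 2 ^ (d + 1) * real d * real n ^ (d - 2)
              else 2 * real d * real n ^ (d - 1))"
  proof (cases "d \<ge> 2")
    case True
    define m where "m = d - 2"
    have dm: "d - 1 = Suc m" "d - 2 = m" "d + 1 = Suc (Suc (Suc m))" using True unfolding m_def by auto
    have b: "(real n + 1)^(Suc m) \<le> real n^(Suc m) + (2^(Suc m) - 1) * real n^m"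
      using binom_bound_real[OF nr] .
    have p2: "(0::real) \<le> 2^m" by simp
    have h: "(2::real)^(Suc m) - 1 \<le> 2 ^ (Suc (Suc (Suc m))) / 2"
    proof -
      have "(2::real)^(Suc(Suc(Suc m)))/2 = 4 * 2^m" by simp
      moreover have "(2::real)^Suc m = 2*2^m" by simp
      ultimately show ?thesis using p2 by linarith
    qed
    have "(2^(Suc m) - 1) * real n^m \<le> (2 ^ (Suc (Suc (Suc m))) / 2) * real n^m"
      by (rule mult_right_mono[OF h]) simp
    hence "(2^(Suc m) - 1) * real n^m \<le> 2 ^ (Suc (Suc (Suc m))) * real n^m / 2"
      by (simp add: mult.commute mult.left_commute)
    hence "(real n + 1)^(Suc m) \<le> real n^(Suc m) + 2 ^ (Suc (Suc (Suc m))) * real n^m / 2"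
      using b by linarith
    hence "2 * real d * (real n + 1)^(Suc m) \<le> 2 * real d * (real n^(Suc m) + 2 ^ (Suc (Suc (Suc m))) * real n^m / 2)"
      by (intro mult_left_mono) auto
    hence "2 * real d * (real n + 1)^(d-1) \<le> 2 * real d * real n ^ (d - 1) + 2 ^ (d + 1) * real d * real n ^ (d - 2)"
      unfolding dm by (simp add: algebra_simps)
    thus ?thesis using P2 True by simp
  next
    case False
    hence "d = 1" using assms by simp
    thus ?thesis using P2 by simp
  qed
qed

end
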